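(* Let $(X,* )$ be a semi-group satisfying $a*b*b*c=a*b*c$ for all $a,b,c\in X$. Let $C^{nc}_n=\mathbb{Z}X^{n+1}$ for $n\ge0$ (and $0$ otherwise), and define $d_i:C^{nc}_n\to C^{nc}_{n-1}$, $0\le i\le n$, on basis elements by $$d_i(x_0,\dots,x_n)=\begin{cases}(x_0*x_1,x_2,\dots,x_n) & i=0,\\ (x_0,\dots,x_{n-2},x_{n-1}*x_n) & i=n,\\ (x_0,\dots,x_{i-2},x_{i-1}*x_i,x_i*x_{i+1},x_{i+2},\dots,x_n) & 0<i<n.\end{cases}$$ Let $\partial^{nc}_n=\sum_{i=0}^n(-1)^i d_i$. Then $(C^{nc}_n,\partial^{nc}_n)$ is a chain complex. *)

theory Defs
  imports Main "HOL-Library.Poly_Mapping"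
begin

definition face :: "('a \<Rightarrow> 'a \<Rightarrow> 'a) \<Rightarrow> nat \<Rightarrow> nat \<Rightarrow> 'a list \<Rightarrow> 'a list" where
  "face m n i xs =
    (if i = 0 then m (xs ! 0) (xs ! 1) # drop 2 xs
     else if i = n then take (n - 1) xs @ [m (xs ! (n - 1)) (xs ! n)]
     else take (i - 1) xs @ [m (xs ! (i - 1)) (xs ! i), m (xs ! i) (xs ! (i + 1))] @ drop (i + 2) xs)"

text \<open>Chains: the free abelian group on tuples, i.e. finitely supported maps 'a list to int.
  C_n consists of those chains supported on tuples of length n+1.\<close>
definition chains :: "nat \<Rightarrow> ('a list \<Rightarrow>\<^sub>0 int) set" where
  "chains n = {c. Poly_Mapping.keys c \<subseteq> {xs. length xs = Suc n}}"

text \<open>Boundary map on C_n: the linear extension of sum (-1)^i d_i; zero for n = 0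
  (as C_{-1} = 0).\<close>
definition bdry :: "('a \<Rightarrow> 'a \<Rightarrow> 'a) \<Rightarrow> nat \<Rightarrow> ('a list \<Rightarrow>\<^sub>0 int) \<Rightarrow> ('a list \<Rightarrow>\<^sub>0 int)" where
  "bdry m n c =
    (if n = 0 then 0
     else frag_extend (\<lambda>xs. \<Sum>i\<le>n. frag_cmul ((-1) ^ i) (frag_of (face m n i xs))) c)"

end

theory Submission imports Defs begin

lemma face_len:
  assumes "1 \<le> n" "length xs = Suc n" "i \<le> n"
  shows "length (face m n i xs) = n"
  using assms unfolding face_def by auto

lemma face_nth:
  assumes "1 \<le> n" "length xs = Suc n" "i \<le> n" "k < n"
  shows "face m n i xs ! k = (if Suc k < i then xs!k else if Suc k = i \<or> k = i then m (xs!k) (xs!Suc k) else xs ! Suc k)"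
  using assms unfolding face_def
  by (auto simp: nth_append min_def nth_Cons' Suc_diff_Suc numeral_2_eq_2 add.commute)

lemma face_comm:
  assumes assoc: "\<And>a b c. m (m a b) c = m a (m b c)"
    and idem: "\<And>a b c. m (m (m a b) b) c = m (m a b) c"
    and "1 \<le> n" "length xs = Suc (Suc n)" "i < j" "j \<le> Suc n"
  shows "face m n i (face m (Suc n) j xs) = face m n (j-1) (face m (Suc n) i xs)"
proof -
  have idem': "\<And>a b c. m a (m b (m b c)) = m a (m b c)" using idem assoc by metis
  show ?thesis
  proof (rule nth_equalityI)
    show "length (face m n i (face m (Suc n) j xs)) = length (face m n (j-1) (face m (Suc n) i xs))"
      using assms by (simp add: face_len)
  next
    fix k assume "k < length (face m n i (face m (Suc n) j xs))"
    then have k: "k < n" using assms by (simp add: face_len)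
    show "face m n i (face m (Suc n) j xs) ! k = face m n (j-1) (face m (Suc n) i xs) ! k"
      using assms k by (auto simp: face_nth face_len assoc idem')
  qed
qed


lemma frag_extend_extend:
  "frag_extend f (frag_extend g c) = frag_extend (\<lambda>x. frag_extend f (g x)) c"
  using subset_UNIV
  by (induction c rule: frag_induction) (auto simp: frag_extend_diff)

lemma cancel:
  fixes g :: "nat \<Rightarrow> nat \<Rightarrow> 'x \<Rightarrow>\<^sub>0 int"
  assumes "\<And>i j. i < j \<Longrightarrow> j \<le> Suc n \<Longrightarrow> g i j = g (j-1) i"
  shows "(\<Sum>j\<le>Suc n. frag_cmul ((-1)^j) (\<Sum>i\<le>n. frag_cmul ((-1)^i) (g i j))) = 0"
proof -
  let ?h = "\<lambda>(i,j). frag_cmul ((-1)^(i+j)) (g i j)"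
  let ?S = "{..n} \<times> {..Suc n}"
  let ?A = "{(i,j). i < j \<and> j \<le> Suc n}"
  let ?B = "{(i,j). j \<le> i \<and> i \<le> n}"
  have "(\<Sum>j\<le>Suc n. frag_cmul ((-1)^j) (\<Sum>i\<le>n. frag_cmul ((-1)^i) (g i j)))
      = (\<Sum>j\<le>Suc n. \<Sum>i\<le>n. ?h (i,j))"
    by (simp add: frag_cmul_sum power_add mult.commute)
  also have "\<dots> = (\<Sum>i\<le>n. \<Sum>j\<le>Suc n. ?h (i,j))"
    by (rule sum.swap)
  also have "\<dots> = sum ?h ?S"
    by (simp only: sum.cartesian_product case_prod_beta' fst_conv snd_conv)
  also have "?S = ?A \<union> ?B" by auto
  also have "sum ?h (?A \<union> ?B) = sum ?h ?A + sum ?h ?B"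
    by (rule sum.union_disjoint) (auto intro: finite_subset[of _ ?S])
  finally have main: "(\<Sum>j\<le>Suc n. frag_cmul ((-1)^j) (\<Sum>i\<le>n. frag_cmul ((-1)^i) (g i j))) = sum ?h ?A + sum ?h ?B" .
  have bij: "bij_betw (\<lambda>(a,b). (b, Suc a)) ?B ?A"
      by (rule bij_betw_byWitness[where f'="\<lambda>(i,j). (j - 1, i)"]) auto
  have "sum ?h ?A = sum (\<lambda>x. ?h ((\<lambda>(a,b). (b, Suc a)) x)) ?B"
    by (rule sum.reindex_bij_betw[OF bij, symmetric])
  also have "\<dots> = - sum ?h ?B"
    unfolding sum_negf[symmetric]
  proof (rule sum.cong[OF refl])
    fix x assume "x \<in> ?B"
    then obtain a b where x: "x = (a,b)" "b \<le> a" "a \<le> n" by auto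
    have "g b (Suc a) = g a b" using assms[of b "Suc a"] x by simp
    then show "?h ((\<lambda>(a,b). (b, Suc a)) x) = - ?h x"
      using x by (simp add: add.commute)
  qed
  finally show ?thesis using main by simp
qed

lemma bdry_chains:
  assumes c: "c \<in> chains (Suc n)"
  shows "bdry m (Suc n) c \<in> chains n"
proof -
  have key: "Poly_Mapping.keys (\<Sum>i\<le>Suc n. frag_cmul ((-1)^i) (frag_of (face m (Suc n) i xs))) \<subseteq> {ys. length ys = Suc n}"
    if lxs: "length xs = Suc (Suc n)" for xs
  proof (rule order_trans[OF keys_sum], rule UN_least)
    fix i assume i: "i \<in> {..Suc n}"
    have "length (face m (Suc n) i xs) = Suc n" using i lxs by (intro face_len) auto
    then show "Poly_Mapping.keys (frag_cmul ((-1)^i) (frag_of (face m (Suc n) i xs))) \<subseteq> {ys. length ys = Suc n}"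
      using keys_cmul[of "(-1)^i" "frag_of (face m (Suc n) i xs)"] by (auto simp only: keys_frag_of)
  qed
  have "Poly_Mapping.keys (frag_extend (\<lambda>xs. \<Sum>i\<le>Suc n. frag_cmul ((-1)^i) (frag_of (face m (Suc n) i xs))) c) \<subseteq> {ys. length ys = Suc n}"
  proof (rule order_trans[OF keys_frag_extend], rule UN_least)
    fix xs assume "xs \<in> Poly_Mapping.keys c"
    then have "length xs = Suc (Suc n)" using c by (auto simp: chains_def)
    then show "Poly_Mapping.keys (\<Sum>i\<le>Suc n. frag_cmul ((-1)^i) (frag_of (face m (Suc n) i xs))) \<subseteq> {ys. length ys = Suc n}"
      by (rule key)
  qed
  then show ?thesis unfolding chains_def bdry_def if_not_P[OF Suc_neq_Zero] by simp
qed

theorem theorem1p6: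
  fixes m :: "'a \<Rightarrow> 'a \<Rightarrow> 'a"
  assumes assoc: "\<And>a b c. m (m a b) c = m a (m b c)"
    and idem: "\<And>a b c. m (m (m a b) b) c = m (m a b) c"
  shows "(\<forall>n. \<forall>c \<in> chains (Suc n). bdry m (Suc n) c \<in> chains n)
       \<and> (\<forall>n. \<forall>c \<in> chains (Suc n). bdry m n (bdry m (Suc n) c) = 0)"
proof (intro conjI allI ballI)
  fix n and c :: "'a list \<Rightarrow>\<^sub>0 int" assume c: "c \<in> chains (Suc n)"
  show "bdry m (Suc n) c \<in> chains n"
    using c by (rule bdry_chains)
next
  fix n and c :: "'a list \<Rightarrow>\<^sub>0 int" assume c: "c \<in> chains (Suc n)"
  show "bdry m n (bdry m (Suc n) c) = 0"
  proof (cases n)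
    case 0 then show ?thesis by (simp add: bdry_def)
  next
    case (Suc k)
    have nz: "n \<noteq> 0" "Suc n \<noteq> 0" using Suc by auto
    have H: "frag_extend (\<lambda>xs. \<Sum>i\<le>n. frag_cmul ((-1)^i) (frag_of (face m n i xs)))
           (frag_extend (\<lambda>xs. \<Sum>i\<le>Suc n. frag_cmul ((-1)^i) (frag_of (face m (Suc n) i xs))) c) = 0"
      unfolding frag_extend_extend
    proof (rule frag_extend_eq_0)
      fix xs assume xs: "xs \<in> Poly_Mapping.keys c"
      have lxs: "length xs = Suc (Suc n)" using c xs by (auto simp: chains_def)
      have "frag_extend (\<lambda>xs. \<Sum>i\<le>n. frag_cmul ((-1)^i) (frag_of (face m n i xs)))
             (\<Sum>j\<le>Suc n. frag_cmul ((-1)^j) (frag_of (face m (Suc n) j xs)))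
          = (\<Sum>j\<le>Suc n. frag_cmul ((-1)^j) (\<Sum>i\<le>n. frag_cmul ((-1)^i) (frag_of (face m n i (face m (Suc n) j xs)))))"
        by (simp only: frag_extend_sum[OF finite_atMost] comp_def frag_extend_cmul frag_extend_of)
      also have "\<dots> = 0"
      proof (rule cancel)
        fix i j assume ij: "i < j" "j \<le> Suc n"
        show "frag_of (face m n i (face m (Suc n) j xs)) = frag_of (face m n (j - 1) (face m (Suc n) i xs))"
          using face_comm[OF assoc idem, of n xs i j] lxs Suc ij by simp
      qed
      finally show "frag_extend (\<lambda>xs. \<Sum>i\<le>n. frag_cmul ((-1)^i) (frag_of (face m n i xs)))
             (\<Sum>j\<le>Suc n. frag_cmul ((-1)^j) (frag_of (face m (Suc n) j xs))) = 0" .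
    qed
    show ?thesis unfolding bdry_def if_not_P[OF nz(1)] if_not_P[OF nz(2)] by (rule H)
  qed
qed

end
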